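(* Let $r\in\mathbb{N}$, $r\ge2$, and let $\underline{m}=(m_0,m_1,m_2,m_3)\in\mathbb{N}^4$ be such that for a single $\ell\in\{0,1,2,3\}$, $\gcd(m_\ell,r)=K$ and $\gcd(m_i,r)=1$ for $i\ne\ell$. Let $t\in\{0,\dots,K-1\}$. Then: (1) for $i<\ell$, there are $\frac{r}{K}$ 1-step admissible paths from $(v_i,0)$ to $(v_\ell,t)$; (2) for $i>\ell$, there are $\frac{r}{K}$ 1-step admissible paths from $(v_\ell,t)$ to $(v_i,0)$.
   Context: $\Lambda=L_7\times_c\mathbb{Z}_r$ is the directed graph with vertices $(v_i,k)$, $0\le i\le 3$, $k\in\mathbb{Z}_r$, and edges $(e_{ij},k)$, $0\le i\le j\le 3$, $k\in\mathbb{Z}_r$, with source $(v_i,k-m_i\bmod r)$ and range $(v_j,k)$; the vertices $(v_i,k)$, $k\in\mathbb{Z}_r$, form level $i$. A path is a finite sequence of edges each starting at the range of the previous. A path of length at least one from $(v_i,s)$ to $(v_j,t)$ is admissible if none of the vertices it passes through other than its source and range lies in $\{(v_p,k): \min(i,j)\le p\le \max(i,j),\ 0\le k\le\gcd(m_p,r)-1\}$. An admissible path is $k$-step if the set of levels containing its vertices (including source and range) has exactly $k+1$ elements; in particular a 1-step path only visits the level of its source and the level of its range. *)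

theory Defs
  imports Main
begin

text \<open>A vertex (v_i,k) is the pair (i,k) with i \<le> 3, k < r.
  An edge (e_ij,k) is the triple (i,j,k) with i \<le> j \<le> 3, k < r.\<close>

type_synonym vert = "nat \<times> nat"
type_synonym edge = "nat \<times> nat \<times> nat"

definition L7_vertices :: "nat \<Rightarrow> vert set" where
  "L7_vertices r = {(i,k). i \<le> 3 \<and> k < r}"

definition L7_edges :: "nat \<Rightarrow> edge set" where
  "L7_edges r = {(i,j,k). i \<le> j \<and> j \<le> 3 \<and> k < r}"

fun esrc :: "(nat \<Rightarrow> nat) \<Rightarrow> nat \<Rightarrow> edge \<Rightarrow> vert" where
  "esrc m r (i,j,k) = (i, nat ((int k - int (m i)) mod int r))"

fun erng :: "edge \<Rightarrow> vert" where
  "erng (i,j,k) = (j,k)"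

definition is_path :: "(nat \<Rightarrow> nat) \<Rightarrow> nat \<Rightarrow> edge list \<Rightarrow> bool" where
  "is_path m r p \<longleftrightarrow> p \<noteq> [] \<and> set p \<subseteq> L7_edges r \<and>
     (\<forall>n. Suc n < length p \<longrightarrow> erng (p ! n) = esrc m r (p ! Suc n))"

definition path_src :: "(nat \<Rightarrow> nat) \<Rightarrow> nat \<Rightarrow> edge list \<Rightarrow> vert" where
  "path_src m r p = esrc m r (hd p)"

definition path_rng :: "edge list \<Rightarrow> vert" where
  "path_rng p = erng (last p)"

definition path_verts :: "(nat \<Rightarrow> nat) \<Rightarrow> nat \<Rightarrow> edge list \<Rightarrow> vert list" where
  "path_verts m r p = esrc m r (hd p) # map erng p"

definition interior_verts :: "edge list \<Rightarrow> vert list" where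
  "interior_verts p = map erng (butlast p)"

definition forbidden :: "(nat \<Rightarrow> nat) \<Rightarrow> nat \<Rightarrow> nat \<Rightarrow> nat \<Rightarrow> vert set" where
  "forbidden m r i j = {(q,k). min i j \<le> q \<and> q \<le> max i j \<and> k \<le> gcd (m q) r - 1}"

definition admissible :: "(nat \<Rightarrow> nat) \<Rightarrow> nat \<Rightarrow> vert \<Rightarrow> vert \<Rightarrow> edge list \<Rightarrow> bool" where
  "admissible m r u w p \<longleftrightarrow> is_path m r p \<and> path_src m r p = u \<and> path_rng p = w \<and>
     set (interior_verts p) \<inter> forbidden m r (fst u) (fst w) = {}"

definition k_step_adm :: "(nat \<Rightarrow> nat) \<Rightarrow> nat \<Rightarrow> nat \<Rightarrow> vert \<Rightarrow> vert \<Rightarrow> edge list \<Rightarrow> bool" where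
  "k_step_adm m r k u w p \<longleftrightarrow> admissible m r u w p \<and>
     card (fst ` set (path_verts m r p)) = k + 1"

end

theory Submission
  imports Defs "HOL-Number_Theory.Cong"
begin

definition pos :: "(nat \<Rightarrow> nat) \<Rightarrow> nat \<Rightarrow> nat \<Rightarrow> nat \<Rightarrow> nat \<Rightarrow> nat \<Rightarrow> nat \<Rightarrow> nat" where
  "pos m r q1 q2 x0 a j = (if j \<le> a then (x0 + (j+1)*m q1) mod r
      else (x0 + (a+1)*m q1 + (j-a)*m q2) mod r)"
definition lv :: "nat \<Rightarrow> nat \<Rightarrow> nat \<Rightarrow> nat \<Rightarrow> nat" where
  "lv q1 q2 a j = (if j < a then q1 else q2)"
definition sl :: "nat \<Rightarrow> nat \<Rightarrow> nat \<Rightarrow> nat \<Rightarrow> nat" where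
  "sl q1 q2 a j = (if j \<le> a then q1 else q2)"
definition PP :: "(nat \<Rightarrow> nat) \<Rightarrow> nat \<Rightarrow> nat \<Rightarrow> nat \<Rightarrow> nat \<Rightarrow> nat \<Rightarrow> nat \<Rightarrow> edge list" where
  "PP m r q1 q2 x0 a b = map (\<lambda>j. (sl q1 q2 a j, lv q1 q2 a j, pos m r q1 q2 x0 a j)) [0..<a+b+1]"
definition gc :: "(nat \<Rightarrow> nat) \<Rightarrow> nat \<Rightarrow> nat \<Rightarrow> nat \<Rightarrow> nat \<Rightarrow> nat \<Rightarrow> nat \<Rightarrow> nat \<Rightarrow> bool" where
  "gc m r q1 q2 x0 y a b = ((\<forall>j<a+b. (lv q1 q2 a j, pos m r q1 q2 x0 a j) \<notin> forbidden m r q1 q2)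
     \<and> pos m r q1 q2 x0 a (a+b) = y)"

lemma esrc_eq:
  assumes "(0::nat) < r" "k < r" "x < r"
  shows "nat ((int k - int s) mod int r) = x \<longleftrightarrow> k = (x + s) mod r"
proof
  assume h: "nat ((int k - int s) mod int r) = x"
  have "(int k - int s) mod int r = int x" using h assms by (metis int_nat_eq mod_int_pos_iff of_nat_0_less_iff)
  then have "(int x + int s) mod int r = int k mod int r" by (metis mod_add_left_eq diff_add_cancel)
  then have "(x + s) mod r = k mod r" by (metis of_nat_add of_nat_eq_iff zmod_int)
  then show "k = (x + s) mod r" using assms by simp
next
  assume h: "k = (x + s) mod r"
  have "(int k - int s) mod int r = (int x + int s - int s) mod int r"
    using h by (simp add: mod_diff_left_eq zmod_int)
  then show "nat ((int k - int s) mod int r) = x" using assms by simp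
qed

lemma pos_lt: "0 < r \<Longrightarrow> pos m r q1 q2 x0 a j < r" by (simp add: pos_def)

lemma pos_0: "pos m r q1 q2 x0 a 0 = (x0 + m (sl q1 q2 a 0)) mod r"
  by (simp add: pos_def sl_def)

lemma pos_Suc: "pos m r q1 q2 x0 a (Suc j) = (pos m r q1 q2 x0 a j + m (sl q1 q2 a (Suc j))) mod r"
proof -
  consider "Suc j \<le> a" | "j = a" | "j > a" by linarith
  then show ?thesis
  proof cases
    case 1 then show ?thesis by (simp add: pos_def sl_def mod_simps algebra_simps)
  next
    case 2 then show ?thesis by (simp add: pos_def sl_def mod_simps algebra_simps)
  next
    case 3
    then obtain d where j: "j = a + d" by (metis less_imp_add_positive)
    have e1: "Suc j - a = Suc d" "j - a = d" using j by auto
    show ?thesis using 3 unfolding pos_def sl_def e1 by (simp add: mod_simps algebra_simps)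
  qed
qed

lemma PP_nth: "j < a+b+1 \<Longrightarrow> PP m r q1 q2 x0 a b ! j = (sl q1 q2 a j, lv q1 q2 a j, pos m r q1 q2 x0 a j)"
  by (simp add: PP_def del: upt_Suc)

lemma PP_len: "length (PP m r q1 q2 x0 a b) = a+b+1" by (simp add: PP_def)

lemma is_path_PP:
  assumes "0 < r" "q1 < q2" "q2 \<le> 3"
  shows "is_path m r (PP m r q1 q2 x0 a b)"
  unfolding is_path_def
proof (intro conjI allI impI)
  show "PP m r q1 q2 x0 a b \<noteq> []" by (simp add: PP_def)
  show "set (PP m r q1 q2 x0 a b) \<subseteq> L7_edges r"
    using assms by (auto simp: PP_def L7_edges_def sl_def lv_def pos_lt)
  fix n assume n: "Suc n < length (PP m r q1 q2 x0 a b)"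
  then have n1: "Suc n < a+b+1" "n < a+b+1" by (auto simp: PP_len)
  have "nat ((int (pos m r q1 q2 x0 a (Suc n)) - int (m (sl q1 q2 a (Suc n)))) mod int r) = pos m r q1 q2 x0 a n"
    using esrc_eq[OF assms(1) pos_lt[OF assms(1)] pos_lt[OF assms(1)]] pos_Suc by blast
  moreover have "lv q1 q2 a n = sl q1 q2 a (Suc n)" by (simp add: lv_def sl_def)
  ultimately show "erng (PP m r q1 q2 x0 a b ! n) = esrc m r (PP m r q1 q2 x0 a b ! Suc n)"
    using n1 by (simp add: PP_nth)
qed

lemma src_PP:
  assumes "0 < r" "x0 < r"
  shows "path_src m r (PP m r q1 q2 x0 a b) = (q1, x0)"
proof -
  have "hd (PP m r q1 q2 x0 a b) = PP m r q1 q2 x0 a b ! 0" by (simp add: hd_conv_nth PP_def del: upt_Suc)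
  also have "\<dots> = (sl q1 q2 a 0, lv q1 q2 a 0, pos m r q1 q2 x0 a 0)" by (simp add: PP_nth)
  finally show ?thesis
    using esrc_eq[of r "(x0 + m q1) mod r" x0 "m q1"] assms
    by (simp add: path_src_def sl_def pos_0)
qed

lemma rng_PP: "path_rng (PP m r q1 q2 x0 a b) = (q2, pos m r q1 q2 x0 a (a+b))"
proof -
  have "last (PP m r q1 q2 x0 a b) = PP m r q1 q2 x0 a b ! (a+b)"
    by (simp add: last_conv_nth PP_def del: upt_Suc)
  then show ?thesis by (simp add: path_rng_def PP_nth lv_def)
qed

lemma interior_PP: "interior_verts (PP m r q1 q2 x0 a b) = map (\<lambda>j. (lv q1 q2 a j, pos m r q1 q2 x0 a j)) [0..<a+b]"
  by (simp add: interior_verts_def PP_def map_butlast[symmetric])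

lemma levels_PP:
  assumes "q1 < q2"
  shows "fst ` set (path_verts m r (PP m r q1 q2 x0 a b)) = {q1, q2}"
proof -
  have "hd (PP m r q1 q2 x0 a b) = PP m r q1 q2 x0 a b ! 0" by (simp add: hd_conv_nth PP_def del: upt_Suc)
  then have h: "fst (esrc m r (hd (PP m r q1 q2 x0 a b))) = q1" by (simp add: PP_nth sl_def)
  have "set (map erng (PP m r q1 q2 x0 a b)) = (\<lambda>j. (lv q1 q2 a j, pos m r q1 q2 x0 a j)) ` {0..<a+b+1}"
    by (auto simp: PP_def simp del: upt_Suc)
  then have "fst ` set (map erng (PP m r q1 q2 x0 a b)) = lv q1 q2 a ` {0..<a+b+1}" by (simp add: image_image)
  moreover have "q2 \<in> lv q1 q2 a ` {0..<a+b+1}" by (rule image_eqI[of _ _ "a+b"]) (auto simp: lv_def)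
  moreover have "lv q1 q2 a ` {0..<a+b+1} \<subseteq> {q1,q2}" by (auto simp: lv_def)
  ultimately show ?thesis using h by (auto simp: path_verts_def)
qed

lemma char:
  assumes r: "0 < r" and q: "q1 < q2" and x0: "x0 < r"
    and adm: "k_step_adm m r 1 (q1,x0) (q2,y) p"
  shows "\<exists>a b. p = PP m r q1 q2 x0 a b"
proof -
  have pth: "is_path m r p" and ps: "path_src m r p = (q1,x0)" and pr: "path_rng p = (q2,y)"
    and cd: "card (fst ` set (path_verts m r p)) = 2"
    using adm by (auto simp: k_step_adm_def admissible_def)
  define n where "n = length p"
  have ne: "p \<noteq> []" using pth by (simp add: is_path_def)
  then have n0: "0 < n" by (simp add: n_def)
  define R where "R j = fst (snd (p ! j))" for j
  define S where "S j = fst (p ! j)" for j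
  define k where "k j = snd (snd (p ! j))" for j
  have pj: "p ! j = (S j, R j, k j)" for j by (simp add: R_def S_def k_def)
  have edg: "j < n \<Longrightarrow> S j \<le> R j \<and> k j < r" for j
    using pth nth_mem[of j p] unfolding is_path_def L7_edges_def n_def
    by (auto simp: pj)
  have adj: "Suc j < n \<Longrightarrow> (R j, k j) = (S (Suc j), nat ((int (k (Suc j)) - int (m (S (Suc j)))) mod int r))" for j
    using pth unfolding is_path_def n_def by (metis erng.simps esrc.simps pj)
  have hd0: "hd p = p ! 0" using ne by (simp add: hd_conv_nth)
  have src0: "(S 0, nat ((int (k 0) - int (m (S 0))) mod int r)) = (q1, x0)"
    using ps unfolding path_src_def hd0 by (metis esrc.simps pj)
  have lst: "last p = p ! (n - 1)" using ne by (simp add: last_conv_nth n_def)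
  have Rlast: "R (n-1) = q2" using pr unfolding path_rng_def lst by (metis erng.simps fst_conv pj)
  have LV: "fst ` set (path_verts m r p) = insert (S 0) (R ` {0..<n})"
  proof -
    have sp: "set p = (\<lambda>j. p ! j) ` {0..<n}" by (auto simp: n_def set_conv_nth)
    have "set (map erng p) = (\<lambda>j. (R j, k j)) ` {0..<n}"
      unfolding set_map sp image_image by (simp add: pj)
    then show ?thesis unfolding path_verts_def hd0 by (auto simp: image_image pj)
  qed
  have q1in: "q1 \<in> fst ` set (path_verts m r p)" using LV src0 by auto
  have q2in: "q2 \<in> fst ` set (path_verts m r p)" using LV Rlast n0 by auto
  have fin: "finite (fst ` set (path_verts m r p))" by simp
  have L2: "fst ` set (path_verts m r p) = {q1,q2}"
  proof -
    have sub: "{q1,q2} \<subseteq> fst ` set (path_verts m r p)" using q1in q2in by auto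
    have "card {q1,q2} = 2" using q by simp
    then show ?thesis using card_subset_eq[OF fin sub] cd by simp
  qed
  have Rin: "j < n \<Longrightarrow> R j = q1 \<or> R j = q2" for j using L2 LV by auto
  have ex: "\<exists>j. R j = q2" using Rlast by blast
  define a where "a = (LEAST j. R j = q2)"
  have Ra: "R a = q2" unfolding a_def by (rule LeastI_ex[OF ex])
  have an: "a \<le> n - 1" unfolding a_def using Rlast by (rule Least_le)
  have Rlow: "j < a \<Longrightarrow> R j = q1" for j
    using not_less_Least[of j "\<lambda>j. R j = q2"] Rin[of j] an unfolding a_def[symmetric] by auto
  have Rhigh: "a + d < n \<Longrightarrow> R (a + d) = q2" for d
  proof (induction d)
    case 0 then show ?case using Ra by simp
  next
    case (Suc d)
    then have "R (a+d) = S (Suc (a+d))" using adj[of "a+d"] by simp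
    moreover have "S (Suc (a+d)) \<le> R (Suc (a+d))" using edg Suc.prems by simp
    ultimately show ?case using Suc Rin[of "a + Suc d"] q by auto
  qed
  have Rlv: "j < n \<Longrightarrow> R j = lv q1 q2 a j" for j
    using Rlow Rhigh[of "j - a"] by (cases "j < a") (auto simp: lv_def)
  have Ssl: "j < n \<Longrightarrow> S j = sl q1 q2 a j" for j
  proof (cases j)
    case 0 then show ?thesis using src0 by (simp add: sl_def)
  next
    case (Suc i)
    assume "j < n"
    then have "S j = R i" using adj[of i] Suc by simp
    then show ?thesis using Rlv[of i] Suc \<open>j<n\<close> by (simp add: lv_def sl_def)
  qed
  have kpos: "j < n \<Longrightarrow> k j = pos m r q1 q2 x0 a j" for j
  proof (induction j)
    case 0
    have "k 0 = (x0 + m (S 0)) mod r" using esrc_eq[OF r _ x0] src0 edg[OF "0.prems"] by auto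
    then show ?case using Ssl[OF "0.prems"] pos_0 by simp
  next
    case (Suc j)
    have e: "nat ((int (k (Suc j)) - int (m (S (Suc j)))) mod int r) = k j" using adj[OF Suc.prems] by simp
    have "k (Suc j) = (k j + m (S (Suc j))) mod r"
      using esrc_eq[OF r _ _] e edg Suc.prems by (metis Suc_lessD)
    then show ?case using Suc pos_Suc Ssl[OF Suc.prems] by simp
  qed
  define b where "b = n - 1 - a"
  have nab: "n = a + b + 1" using an n0 by (simp add: b_def)
  have "p = PP m r q1 q2 x0 a b"
  proof (rule nth_equalityI)
    show "length p = length (PP m r q1 q2 x0 a b)" using nab by (simp add: PP_len n_def)
    fix j assume "j < length p"
    then have j: "j < n" by (simp add: n_def)
    show "p ! j = PP m r q1 q2 x0 a b ! j"
      using j nab by (simp add: PP_nth pj Rlv Ssl kpos)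
  qed
  then show ?thesis by blast
qed

lemma PP_inj:
  assumes "q1 < q2" "PP m r q1 q2 x0 a b = PP m r q1 q2 x0 a' b'"
  shows "a = a' \<and> b = b'"
proof -
  have len: "a + b = a' + b'" using arg_cong[OF assms(2), of length] by (simp add: PP_len)
  have "a = a'"
  proof (rule ccontr)
    assume "a \<noteq> a'"
    then consider "a < a'" | "a' < a" by linarith
    then show False
    proof cases
      case 1
      have "PP m r q1 q2 x0 a b ! a = PP m r q1 q2 x0 a' b' ! a" using assms by simp
      then show False using 1 len assms(1) by (simp add: PP_nth lv_def)
    next
      case 2
      have "PP m r q1 q2 x0 a b ! a' = PP m r q1 q2 x0 a' b' ! a'" using assms by simp
      then show False using 2 len assms(1) by (simp add: PP_nth lv_def)
    qed
  qed
  then show ?thesis using len by simp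
qed

lemma count_gen:
  assumes r: "0 < r" and q: "q1 < q2" "q2 \<le> 3" and x0: "x0 < r"
  shows "card {p. k_step_adm m r 1 (q1,x0) (q2,y) p} = card {(a,b). gc m r q1 q2 x0 y a b}"
proof -
  have adm_iff: "k_step_adm m r 1 (q1,x0) (q2,y) (PP m r q1 q2 x0 a b) \<longleftrightarrow> gc m r q1 q2 x0 y a b" for a b
  proof -
    have "set (interior_verts (PP m r q1 q2 x0 a b)) \<inter> forbidden m r q1 q2 = {} \<longleftrightarrow>
          (\<forall>j<a+b. (lv q1 q2 a j, pos m r q1 q2 x0 a j) \<notin> forbidden m r q1 q2)"
      unfolding interior_PP by (auto simp: disjoint_iff)
    moreover have "card {q1,q2} = 1 + 1" using q by simp
    ultimately show ?thesis
      unfolding k_step_adm_def admissible_def gc_def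
      using is_path_PP[OF r q] src_PP[OF r x0] rng_PP levels_PP[OF q(1)]
      by auto
  qed
  have eq: "{p. k_step_adm m r 1 (q1,x0) (q2,y) p} = (\<lambda>(a,b). PP m r q1 q2 x0 a b) ` {(a,b). gc m r q1 q2 x0 y a b}"
  proof
    show "{p. k_step_adm m r 1 (q1,x0) (q2,y) p} \<subseteq> (\<lambda>(a,b). PP m r q1 q2 x0 a b) ` {(a,b). gc m r q1 q2 x0 y a b}"
    proof
      fix p assume "p \<in> {p. k_step_adm m r 1 (q1,x0) (q2,y) p}"
      then have h: "k_step_adm m r 1 (q1,x0) (q2,y) p" by simp
      then obtain a b where p: "p = PP m r q1 q2 x0 a b" using char[OF r q(1) x0] by blast
      then have "gc m r q1 q2 x0 y a b" using h adm_iff by simp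
      then show "p \<in> (\<lambda>(a,b). PP m r q1 q2 x0 a b) ` {(a,b). gc m r q1 q2 x0 y a b}" using p by auto
    qed
    show "(\<lambda>(a,b). PP m r q1 q2 x0 a b) ` {(a,b). gc m r q1 q2 x0 y a b} \<subseteq> {p. k_step_adm m r 1 (q1,x0) (q2,y) p}"
      using adm_iff by auto
  qed
  have inj: "inj_on (\<lambda>(a,b). PP m r q1 q2 x0 a b) {(a,b). gc m r q1 q2 x0 y a b}"
    by (auto simp: inj_on_def dest: PP_inj[OF q(1)])
  show ?thesis unfolding eq using card_image[OF inj] .
qed


lemma NT1:
  fixes s r e :: nat
  assumes "0 < r" "0 < e" "e < r div gcd s r"
  shows "(e*s) mod r \<noteq> 0"
proof
  assume h: "(e*s) mod r = 0"
  define K where "K = gcd s r"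
  have K0: "0 < K" using assms(1) by (simp add: K_def)
  obtain r' s' where rs: "r = K*r'" "s = K*s'" unfolding K_def by (metis gcd_dvd1 gcd_dvd2 dvdE)
  have cop: "coprime r' s'"
    using div_gcd_coprime[of s r] assms(1) rs K0 unfolding K_def[symmetric]
    by (simp add: coprime_commute)
  have "K*r' dvd K*(e*s')" using h rs by (simp add: mod_eq_0_iff_dvd mult.left_commute)
  then have "r' dvd e*s'" using K0 by simp
  then have "r' dvd e" using cop by (simp add: coprime_dvd_mult_left_iff)
  then have "r' \<le> e" using assms(2) by (simp add: dvd_imp_le)
  moreover have "r div K = r'" using rs K0 by simp
  ultimately show False using assms(3) K_def by simp
qed

lemma NT2:
  fixes s r :: nat
  shows "(r div gcd s r * s) mod r = 0"
proof -
  obtain s' where "s = gcd s r * s'" by (metis gcd_dvd1 dvdE)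
  then have "r div gcd s r * s = r * s'"
    by (metis dvd_div_mult_self gcd_dvd2 mult.assoc mult.commute)
  then show ?thesis by simp
qed

lemma solve:
  fixes s r z c :: nat
  assumes "coprime s r" "0 < r" "c < r"
  shows "\<exists>n\<ge>1. (n*s + z) mod r = c"
proof -
  obtain x where x: "[s*x = c + (r - z mod r)] (mod r)"
    using cong_solve_dvd_nat[of s r "c + (r - z mod r)"] assms(1) by auto
  have "(x*s + z) mod r = (c + (r - z mod r) + z) mod r"
    using x by (metis cong_add_rcancel_nat cong_def mult.commute)
  also have "c + (r - z mod r) + z = c + r * (Suc (z div r))"
  proof -
    have "z mod r < r" using assms(2) by simp
    moreover have "z = r * (z div r) + z mod r" by simp
    moreover have "r * Suc (z div r) = r + r * (z div r)" by simp
    ultimately show ?thesis by linarith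
  qed
  also have "(c + r * (Suc (z div r))) mod r = c" by (metis assms(3) mod_less mod_mult_self2 mult.commute)
  finally have "(x*s + z) mod r = c" .
  moreover have "(x + r)*s + z = (x*s + z) + s * r" by (simp add: algebra_simps)
  ultimately have "((x + r)*s + z) mod r = c" by (metis mod_mult_self1)
  then show ?thesis by (intro exI[of _ "x+r"]) (use assms in auto)
qed


lemma all_split: "(\<forall>j<(a::nat)+b. P j) \<longleftrightarrow> (\<forall>j<a. P j) \<and> (\<forall>d<b. P (a+d))"
proof
  assume H: "\<forall>j<a+b. P j"
  show "(\<forall>j<a. P j) \<and> (\<forall>d<b. P (a+d))"
  proof
    show "\<forall>j<a. P j"
    proof (intro allI impI)
      fix j assume "j < a" then have "j < a+b" by simp
      then show "P j" using H by blast
    qed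
    show "\<forall>d<b. P (a+d)"
    proof (intro allI impI)
      fix d assume "d < b" then have "a+d < a+b" by simp
      then show "P (a+d)" using H by blast
    qed
  qed
next
  assume H: "(\<forall>j<a. P j) \<and> (\<forall>d<b. P (a+d))"
  show "\<forall>j<a+b. P j"
  proof (intro allI impI)
    fix j assume j: "j < a+b"
    show "P j"
    proof (cases "j < a")
      case True then show ?thesis using H by blast
    next
      case False
      define d where "d = j - a"
      have jd: "j = a + d" using False d_def by simp
      have "d < b" using j jd by simp
      then have "P (a+d)" using H by blast
      then show ?thesis unfolding jd .
    qed
  qed
qed

lemma pos_lo: "j \<le> a \<Longrightarrow> pos m r q1 q2 x0 a j = (x0 + (j+1)*m q1) mod r"
  by (simp add: pos_def)

lemma pos_hi: "pos m r q1 q2 x0 a (a+d) = (x0 + (a+1)*m q1 + d*m q2) mod r"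
  by (cases d) (auto simp: pos_def)

lemma forb1: "q1 < q2 \<Longrightarrow> (q1,k) \<in> forbidden m r q1 q2 \<longleftrightarrow> k \<le> gcd (m q1) r - 1"
  by (simp add: forbidden_def)
lemma forb2: "q1 < q2 \<Longrightarrow> (q2,k) \<in> forbidden m r q1 q2 \<longleftrightarrow> k \<le> gcd (m q2) r - 1"
  by (simp add: forbidden_def)

lemma gc_simp:
  assumes "q1 < q2"
  shows "gc m r q1 q2 x0 y a b \<longleftrightarrow>
    (\<forall>j<a. \<not> (x0 + (j+1)*m q1) mod r \<le> gcd (m q1) r - 1) \<and>
    (\<forall>d<b. \<not> (x0 + (a+1)*m q1 + d*m q2) mod r \<le> gcd (m q2) r - 1) \<and>
    (x0 + (a+1)*m q1 + b*m q2) mod r = y"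
proof -
  have A: "(\<forall>j<a. (lv q1 q2 a j, pos m r q1 q2 x0 a j) \<notin> forbidden m r q1 q2) \<longleftrightarrow>
    (\<forall>j<a. \<not> (x0 + (j+1)*m q1) mod r \<le> gcd (m q1) r - 1)"
    using assms by (simp add: lv_def pos_lo forb1)
  have B: "(\<forall>d<b. (lv q1 q2 a (a+d), (x0 + (a+1)*m q1 + d*m q2) mod r) \<notin> forbidden m r q1 q2) \<longleftrightarrow>
    (\<forall>d<b. \<not> (x0 + (a+1)*m q1 + d*m q2) mod r \<le> gcd (m q2) r - 1)"
    using assms by (simp add: lv_def forb2)
  show ?thesis unfolding gc_def all_split by (simp only: A B pos_hi conj_assoc)
qed


lemma modK: "(K::nat) dvd r \<Longrightarrow> x mod r < K \<Longrightarrow> x mod r = x mod K"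
  by (metis mod_less mod_mod_cancel)

lemma mod_cancel0: "((X::nat) + Y) mod r = X mod r \<Longrightarrow> Y mod r = 0"
  by (metis cong_add_lcancel_0_nat cong_def mod_0)

lemma part1:
  assumes r: "2 \<le> r" and il: "i < l" "l \<le> 3" and K: "gcd (m l) r = K"
    and ci: "gcd (m i) r = 1" and t: "t < K"
  shows "card {p. k_step_adm m r 1 (i,0) (l,t) p} = r div K"
proof -
  define s1 where "s1 = m i"
  define s2 where "s2 = m l"
  define N where "N = r div K"
  have r0: "0 < r" using r by simp
  have K0: "0 < K" using K r0 by auto
  have Kr: "K dvd r" using K by auto
  have Ks2: "K dvd s2" using K s2_def by auto
  have Kle: "K \<le> r" using Kr r0 by (simp add: dvd_imp_le)
  have N0: "0 < N" using Kle K0 by (simp add: N_def div_greater_zero_iff)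
  have Ns2: "(N * s2) mod r = 0" using NT2[of r s2] K by (simp add: N_def s2_def)
  have NT1': "0 < e \<Longrightarrow> e < N \<Longrightarrow> (e*s2) mod r \<noteq> 0" for e
    using NT1[OF r0, of e s2] K by (simp add: N_def s2_def)
  have cop: "coprime s1 r" using ci by (simp add: s1_def coprime_iff_gcd_eq_1)
  define C where "C a b = ((\<forall>j<a. ((j+1)*s1) mod r \<noteq> 0) \<and>
     (\<forall>d<b. K \<le> ((a+1)*s1 + d*s2) mod r) \<and> ((a+1)*s1 + b*s2) mod r = t)" for a b
  have gcC: "gc m r i l 0 t a b \<longleftrightarrow> C a b" for a b
    unfolding gc_simp[OF il(1)] C_def s1_def s2_def K ci using K0 by auto
  have cnt: "card {p. k_step_adm m r 1 (i,0) (l,t) p} = card {(a,b). C a b}"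
    using count_gen[OF r0 il(1) il(2), of 0 m t] r0 gcC by simp
  have i1: "C a b \<Longrightarrow> b < N" for a b
  proof (rule ccontr)
    assume c: "C a b" and "\<not> b < N"
    then obtain d where d: "b = d + N" by (metis le_add_diff_inverse2 not_less)
    then have "d < b" using N0 by simp
    then have "K \<le> ((a+1)*s1 + d*s2) mod r" using c unfolding C_def by blast
    moreover have "((a+1)*s1 + d*s2) mod r = ((a+1)*s1 + b*s2) mod r"
    proof -
      have "((a+1)*s1 + b*s2) = ((a+1)*s1 + d*s2) + N*s2" by (simp add: d algebra_simps)
      then show ?thesis by (metis mod_add_right_eq Ns2 add_0_right)
    qed
    ultimately show False using c t unfolding C_def by simp
  qed
  have i2: "C a b \<Longrightarrow> C a' b \<Longrightarrow> a \<le> a'" for a a' b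
  proof (rule ccontr)
    assume c: "C a b" "C a' b" and "\<not> a \<le> a'"
    then obtain e where e: "a = a' + Suc e" using less_imp_Suc_add[of a' a] by auto
    have "((a'+1)*s1 + b*s2 + (Suc e)*s1) mod r = ((a'+1)*s1 + b*s2) mod r"
      using c unfolding C_def e by (simp add: algebra_simps)
    then have "((Suc e)*s1) mod r = 0" by (rule mod_cancel0)
    moreover have "e < a" using e by simp
    ultimately show False using c(1) unfolding C_def by auto
  qed
  have i3: "b < N \<Longrightarrow> \<exists>a. C a b" for b
  proof -
    assume bN: "b < N"
    define P where "P n = (1 \<le> n \<and> (n*s1 + b*s2) mod r = t)" for n
    have exP: "\<exists>n. P n" using solve[OF cop r0, of t "b*s2"] t Kle by (auto simp: P_def)
    define n0 where "n0 = (LEAST n. P n)"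
    have Pn0: "P n0" unfolding n0_def by (rule LeastI_ex[OF exP])
    have minP: "n < n0 \<Longrightarrow> \<not> P n" for n unfolding n0_def by (rule not_less_Least)
    define a where "a = n0 - 1"
    have an: "a + 1 = n0" using Pn0 by (simp add: a_def P_def)
    have c3: "((a+1)*s1 + b*s2) mod r = t" using Pn0 an by (simp add: P_def)
    have c1: "\<forall>j<a. ((j+1)*s1) mod r \<noteq> 0"
    proof (intro allI impI notI)
      fix j assume j: "j < a" and z: "((j+1)*s1) mod r = 0"
      define n where "n = n0 - (j+1)"
      have nn: "n0 = n + (j+1)" "1 \<le> n" using j an by (auto simp: n_def)
      have "(n*s1 + b*s2) mod r = (n*s1 + b*s2 + (j+1)*s1) mod r"
        using z by (metis add.right_neutral mod_add_right_eq)
      also have "\<dots> = t" using c3 an nn(1) by (simp add: algebra_simps)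
      finally have "P n" using nn by (simp add: P_def)
      moreover have "n < n0" using nn by simp
      ultimately show False using minP by blast
    qed
    have c2: "\<forall>d<b. K \<le> ((a+1)*s1 + d*s2) mod r"
    proof (intro allI impI)
      fix d assume db: "d < b"
      show "K \<le> ((a+1)*s1 + d*s2) mod r"
      proof (rule ccontr)
        assume "\<not> K \<le> ((a+1)*s1 + d*s2) mod r"
        then have lt: "((a+1)*s1 + d*s2) mod r < K" by simp
        obtain e where e: "b = d + e" "0 < e" using db by (metis less_imp_add_positive)
        have Ke: "K dvd e*s2" using Ks2 by simp
        have eqb: "(a+1)*s1 + d*s2 + e*s2 = (a+1)*s1 + b*s2" using e(1) by (simp add: add_mult_distrib)
        have es: "(e*s2) mod K = 0" using Ke by simp
        have "((a+1)*s1 + d*s2) mod r = ((a+1)*s1 + d*s2) mod K" using modK[OF Kr lt] .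
        also have "\<dots> = ((a+1)*s1 + d*s2 + (e*s2) mod K) mod K" using es by simp
        also have "\<dots> = ((a+1)*s1 + d*s2 + e*s2) mod K" by (rule mod_add_right_eq)
        also have "\<dots> = (((a+1)*s1 + b*s2) mod r) mod K" unfolding eqb using mod_mod_cancel[OF Kr] by simp
        also have "\<dots> = t" using c3 t by simp
        finally have v: "((a+1)*s1 + d*s2) mod r = t" .
        have "((a+1)*s1 + d*s2 + e*s2) mod r = ((a+1)*s1 + d*s2) mod r" unfolding eqb using c3 v by simp
        then have "(e*s2) mod r = 0" by (rule mod_cancel0)
        moreover have "e < N" using e bN by simp
        ultimately show False using NT1'[OF e(2)] by simp
      qed
    qed
    show ?thesis using c1 c2 c3 unfolding C_def by blast
  qed
  have img: "snd ` {(a,b). C a b} = {..<N}"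
  proof
    show "snd ` {(a,b). C a b} \<subseteq> {..<N}" using i1 by auto
    show "{..<N} \<subseteq> snd ` {(a,b). C a b}"
    proof
      fix b assume "b \<in> {..<N}"
      then obtain a where "C a b" using i3 by blast
      then show "b \<in> snd ` {(a,b). C a b}" by (intro image_eqI[of b snd "(a,b)"]) auto
    qed
  qed
  have inj: "inj_on snd {(a,b). C a b}"
  proof (rule inj_onI)
    fix x y assume "x \<in> {(a,b). C a b}" "y \<in> {(a,b). C a b}" "snd x = snd y"
    then obtain a b a' where "x = (a,b)" "y = (a',b)" "C a b" "C a' b" by (cases x, cases y) auto
    then show "x = y" using i2[of a b a'] i2[of a' b a] by simp
  qed
  have "card {(a,b). C a b} = card {..<N}" using card_image[OF inj] img by simp
  then show ?thesis using cnt N_def by simp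
qed


lemma part2:
  assumes r: "2 \<le> r" and il: "l < i" "i \<le> 3" and K: "gcd (m l) r = K"
    and ci: "gcd (m i) r = 1" and t: "t < K"
  shows "card {p. k_step_adm m r 1 (l,t) (i,0) p} = r div K"
proof -
  define s1 where "s1 = m l"
  define s2 where "s2 = m i"
  define N where "N = r div K"
  have r0: "0 < r" using r by simp
  have K0: "0 < K" using K r0 by auto
  have Kr: "K dvd r" using K by auto
  have Ks1: "K dvd s1" using K s1_def by auto
  have Kle: "K \<le> r" using Kr r0 by (simp add: dvd_imp_le)
  have tr: "t < r" using t Kle by simp
  have N0: "0 < N" using Kle K0 by (simp add: N_def div_greater_zero_iff)
  have Ns1: "(N * s1) mod r = 0" using NT2[of r s1] K by (simp add: N_def s1_def)
  have NT1': "0 < e \<Longrightarrow> e < N \<Longrightarrow> (e*s1) mod r \<noteq> 0" for e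
    using NT1[OF r0, of e s1] K by (simp add: N_def s1_def)
  have cop: "coprime s2 r" using ci by (simp add: s2_def coprime_iff_gcd_eq_1)
  define C where "C a b = ((\<forall>j<a. K \<le> (t + (j+1)*s1) mod r) \<and>
     (\<forall>d<b. (t + (a+1)*s1 + d*s2) mod r \<noteq> 0) \<and> (t + (a+1)*s1 + b*s2) mod r = 0)" for a b
  have gcC: "gc m r l i t 0 a b \<longleftrightarrow> C a b" for a b
    unfolding gc_simp[OF il(1)] C_def s1_def s2_def K ci using K0 by auto
  have cnt: "card {p. k_step_adm m r 1 (l,t) (i,0) p} = card {(a,b). C a b}"
    using count_gen[OF r0 il(1) il(2) tr, of m 0] gcC by simp
  have i1: "C a b \<Longrightarrow> a < N" for a b
  proof (rule ccontr)
    assume c: "C a b" and "\<not> a < N"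
    then have "N - 1 < a" using N0 by simp
    then have "K \<le> (t + (N - 1 + 1)*s1) mod r" using c unfolding C_def by blast
    moreover have "(t + (N - 1 + 1)*s1) mod r = t"
    proof -
      have "N - 1 + 1 = N" using N0 by simp
      then have "(t + (N - 1 + 1)*s1) mod r = (t + (N*s1) mod r) mod r" by (simp add: mod_add_right_eq)
      also have "\<dots> = t" using Ns1 tr by simp
      finally show ?thesis .
    qed
    ultimately show False using t by simp
  qed
  have i2: "C a b \<Longrightarrow> C a b' \<Longrightarrow> b \<le> b'" for a b b'
  proof (rule ccontr)
    assume c: "C a b" "C a b'" "\<not> b \<le> b'"
    then have "b' < b" by simp
    then have "(t + (a+1)*s1 + b'*s2) mod r \<noteq> 0" using c(1) unfolding C_def by blast
    then show False using c(2) unfolding C_def by simp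
  qed
  have i3: "a < N \<Longrightarrow> \<exists>b. C a b" for a
  proof -
    assume aN: "a < N"
    define P where "P n = ((n*s2 + (t + (a+1)*s1)) mod r = 0)" for n
    have "\<exists>n\<ge>1. P n" unfolding P_def by (rule solve[OF cop r0 r0])
    then have exP: "\<exists>n. P n" by auto
    have comm: "P n \<longleftrightarrow> (t + (a+1)*s1 + n*s2) mod r = 0" for n
      unfolding P_def by (simp add: ac_simps)
    define b where "b = (LEAST n. P n)"
    have Pb: "P b" unfolding b_def by (rule LeastI_ex[OF exP])
    have minP: "n < b \<Longrightarrow> \<not> P n" for n unfolding b_def by (rule not_less_Least)
    have c2: "\<forall>d<b. (t + (a+1)*s1 + d*s2) mod r \<noteq> 0" using minP unfolding comm by blast
    have c1: "\<forall>j<a. K \<le> (t + (j+1)*s1) mod r"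
    proof (intro allI impI)
      fix j assume ja: "j < a"
      show "K \<le> (t + (j+1)*s1) mod r"
      proof (rule ccontr)
        assume "\<not> K \<le> (t + (j+1)*s1) mod r"
        then have lt: "(t + (j+1)*s1) mod r < K" by simp
        have Ke: "K dvd (j+1)*s1" using Ks1 by simp
        have "(t + (j+1)*s1) mod r = (t + (j+1)*s1) mod K" using modK[OF Kr lt] .
        also have "\<dots> = (t + ((j+1)*s1) mod K) mod K" by (rule mod_add_right_eq[symmetric])
        also have "\<dots> = t mod K" using Ke by simp
        also have "\<dots> = t" using t by simp
        finally have "(t + (j+1)*s1) mod r = t mod r" using tr by simp
        then have "((j+1)*s1) mod r = 0" by (rule mod_cancel0)
        moreover have "j + 1 < N" using ja aN by simp
        ultimately show False using NT1'[of "j+1"] by simp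
      qed
    qed
    have c3: "(t + (a+1)*s1 + b*s2) mod r = 0" using Pb comm by simp
    have "C a b" unfolding C_def using c1 c2 c3 by (intro conjI)
    then show ?thesis by blast
  qed
  have img: "fst ` {(a,b). C a b} = {..<N}"
  proof
    show "fst ` {(a,b). C a b} \<subseteq> {..<N}" using i1 by auto
    show "{..<N} \<subseteq> fst ` {(a,b). C a b}"
    proof
      fix a assume "a \<in> {..<N}"
      then obtain b where "C a b" using i3 by blast
      then show "a \<in> fst ` {(a,b). C a b}" by (intro image_eqI[of a fst "(a,b)"]) auto
    qed
  qed
  have inj: "inj_on fst {(a,b). C a b}"
  proof (rule inj_onI)
    fix x y assume "x \<in> {(a,b). C a b}" "y \<in> {(a,b). C a b}" "fst x = fst y"
    then obtain a b b' where "x = (a,b)" "y = (a,b')" "C a b" "C a b'" by (cases x, cases y) auto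
    then show "x = y" using i2[of a b b'] i2[of a b' b] by simp
  qed
  have "card {(a,b). C a b} = card {..<N}" using card_image[OF inj] img by simp
  then show ?thesis using cnt N_def by simp
qed

theorem lemma6p2:
  fixes r K l t :: nat and m :: "nat \<Rightarrow> nat"
  assumes "r \<ge> 2"
    and "l \<le> 3"
    and "gcd (m l) r = K"
    and "\<forall>i\<le>3. i \<noteq> l \<longrightarrow> gcd (m i) r = 1"
    and "t < K"
  shows "(\<forall>i<l. card {p. k_step_adm m r 1 (i,0) (l,t) p} = r div K) \<and>
         (\<forall>i. l < i \<and> i \<le> 3 \<longrightarrow> card {p. k_step_adm m r 1 (l,t) (i,0) p} = r div K)"
proof (intro conjI allI impI)
  fix i assume "i < l"
  then show "card {p. k_step_adm m r 1 (i,0) (l,t) p} = r div K"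
    using part1[of r i l m K t] assms by simp
next
  fix i assume "l < i \<and> i \<le> 3"
  then show "card {p. k_step_adm m r 1 (l,t) (i,0) p} = r div K"
    using part2[of r l i m K t] assms by simp
qed

end
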